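(* Let $G$ be a cacti-graph and $a,b\in E(G)$. If $a$ and $b$ lie in the same component of $G$, then for every integer $k$ with $1\le k\le \Delta G$ there exists a subgraph $F$ of $G$ such that $a,b\in E(F)$, $F$ is a cacti-graph, and $\Delta F=k$. If $a$ and $b$ lie in different components of $G$, then for every integer $k$ with $2\le k\le\Delta G$ there exists a subgraph $F$ of $G$ such that $a,b\in E(F)$, $F$ is a cacti-graph, and $\Delta F=k$.
   Context: Graphs are finite, may have loops and parallel edges, and have no isolated vertices unless stated otherwise. A leaf is a vertex incident to exactly one edge, which is not a loop. $\Delta G=|E(G)|-|V(G)|$. A cycle is a connected graph all of whose vertices have degree 2 (a loop contributes 2). A cacti-graph is a graph with no isolated vertices, no leaves, and no component that is a cycle (equivalently, no isolated vertices, no leaves, and every component contains at least two cycles). *)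

theory Defs
  imports Main
begin

text \<open>A finite multigraph (loops and parallel edges allowed): vertex set V, edge set E,
  and an incidence map inc giving the set of endpoints of each edge
  (a singleton for a loop, a two-element set otherwise).\<close>
definition graph :: "'v set \<Rightarrow> 'e set \<Rightarrow> ('e \<Rightarrow> 'v set) \<Rightarrow> bool" where
  "graph V E inc \<longleftrightarrow> finite V \<and> finite E \<and>
     (\<forall>e\<in>E. inc e \<subseteq> V \<and> (card (inc e) = 1 \<or> card (inc e) = 2))"

definition degree :: "'e set \<Rightarrow> ('e \<Rightarrow> 'v set) \<Rightarrow> 'v \<Rightarrow> nat" where
  "degree E inc v = card {e\<in>E. v \<in> inc e \<and> card (inc e) = 2} + 2 * card {e\<in>E. inc e = {v}}"

definition isolated :: "'v set \<Rightarrow> 'e set \<Rightarrow> ('e \<Rightarrow> 'v set) \<Rightarrow> 'v \<Rightarrow> bool" where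
  "isolated V E inc v \<longleftrightarrow> v \<in> V \<and> \<not> (\<exists>e\<in>E. v \<in> inc e)"

definition leaf :: "'v set \<Rightarrow> 'e set \<Rightarrow> ('e \<Rightarrow> 'v set) \<Rightarrow> 'v \<Rightarrow> bool" where
  "leaf V E inc v \<longleftrightarrow> v \<in> V \<and> (\<exists>!e. e \<in> E \<and> v \<in> inc e) \<and>
     (\<forall>e\<in>E. v \<in> inc e \<longrightarrow> card (inc e) = 2)"

definition adj :: "'e set \<Rightarrow> ('e \<Rightarrow> 'v set) \<Rightarrow> 'v \<Rightarrow> 'v \<Rightarrow> bool" where
  "adj E inc u v \<longleftrightarrow> (\<exists>e\<in>E. u \<in> inc e \<and> v \<in> inc e)"

definition connected_graph :: "'v set \<Rightarrow> 'e set \<Rightarrow> ('e \<Rightarrow> 'v set) \<Rightarrow> bool" where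
  "connected_graph V E inc \<longleftrightarrow> V \<noteq> {} \<and> (\<forall>u\<in>V. \<forall>v\<in>V. (adj E inc)\<^sup>*\<^sup>* u v)"

definition components :: "'v set \<Rightarrow> 'e set \<Rightarrow> ('e \<Rightarrow> 'v set) \<Rightarrow> 'v set set" where
  "components V E inc = {{w \<in> V. (adj E inc)\<^sup>*\<^sup>* v w} | v. v \<in> V}"

definition is_cycle :: "'v set \<Rightarrow> 'e set \<Rightarrow> ('e \<Rightarrow> 'v set) \<Rightarrow> bool" where
  "is_cycle V E inc \<longleftrightarrow> connected_graph V E inc \<and> (\<forall>v\<in>V. degree E inc v = 2)"

definition cacti :: "'v set \<Rightarrow> 'e set \<Rightarrow> ('e \<Rightarrow> 'v set) \<Rightarrow> bool" where
  "cacti V E inc \<longleftrightarrow> graph V E inc \<and>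
     (\<forall>v. \<not> isolated V E inc v) \<and> (\<forall>v. \<not> leaf V E inc v) \<and>
     (\<forall>C\<in>components V E inc. \<not> is_cycle C {e\<in>E. inc e \<subseteq> C} inc)"

definition subgraph :: "'v set \<Rightarrow> 'e set \<Rightarrow> 'v set \<Rightarrow> 'e set \<Rightarrow> ('e \<Rightarrow> 'v set) \<Rightarrow> bool" where
  "subgraph VF EF V E inc \<longleftrightarrow> VF \<subseteq> V \<and> EF \<subseteq> E \<and> (\<forall>e\<in>EF. inc e \<subseteq> VF)"

text \<open>\<Delta>G = |E(G)| - |V(G)|.\<close>
definition excess :: "'v set \<Rightarrow> 'e set \<Rightarrow> int" where
  "excess V E = int (card E) - int (card V)"

definition same_component :: "'v set \<Rightarrow> 'e set \<Rightarrow> ('e \<Rightarrow> 'v set) \<Rightarrow> 'e \<Rightarrow> 'e \<Rightarrow> bool" where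
  "same_component V E inc a b \<longleftrightarrow> (\<exists>C\<in>components V E inc. inc a \<subseteq> C \<and> inc b \<subseteq> C)"

end

theory Submission
  imports Defs
begin



definition VS :: "('e \<Rightarrow> 'v set) \<Rightarrow> 'e set \<Rightarrow> 'v set" where
  "VS inc S = \<Union> (inc ` S)"
definition lv :: "('e \<Rightarrow> 'v set) \<Rightarrow> 'e set \<Rightarrow> 'v set" where
  "lv inc S = {v \<in> VS inc S. degree S inc v = 1}"
definition Phi :: "('e \<Rightarrow> 'v set) \<Rightarrow> 'e set \<Rightarrow> int" where
  "Phi inc S = int (card S) - int (card (VS inc S)) + int (card (lv inc S))"
definition conn :: "('e \<Rightarrow> 'v set) \<Rightarrow> 'e set \<Rightarrow> bool" where
  "conn inc S = (\<forall>u\<in>VS inc S. \<forall>w\<in>VS inc S. (adj S inc)\<^sup>*\<^sup>* u w)"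
definition branchy :: "('e \<Rightarrow> 'v set) \<Rightarrow> 'e set \<Rightarrow> bool" where
  "branchy inc S = (\<forall>v\<in>VS inc S. \<exists>w. (adj S inc)\<^sup>*\<^sup>* v w \<and> 3 \<le> degree S inc w)"
definition LI :: "('e \<Rightarrow> 'v set) \<Rightarrow> 'e set \<Rightarrow> bool" where
  "LI inc S = (\<forall>v\<in>VS inc S. degree S inc v \<noteq> 1)"

lemma VS_insert[simp]: "VS inc (insert f S) = inc f \<union> VS inc S"
  by (auto simp: VS_def)
lemma VS_union: "VS inc (S \<union> T) = VS inc S \<union> VS inc T"
  by (auto simp: VS_def)
lemma VS_mono: "S \<subseteq> T \<Longrightarrow> VS inc S \<subseteq> VS inc T"
  by (auto simp: VS_def)
lemma VS_iff: "v \<in> VS inc S \<longleftrightarrow> (\<exists>e\<in>S. v \<in> inc e)"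
  by (auto simp: VS_def)

lemma adj_mono: "S \<subseteq> T \<Longrightarrow> adj S inc u w \<Longrightarrow> adj T inc u w"
  by (auto simp: adj_def)
lemma rt_adj_mono: "S \<subseteq> T \<Longrightarrow> (adj S inc)\<^sup>*\<^sup>* u w \<Longrightarrow> (adj T inc)\<^sup>*\<^sup>* u w"
  by (metis adj_mono mono_rtranclp)
lemma adj_sym: "adj S inc u w \<Longrightarrow> adj S inc w u"
  by (auto simp: adj_def)
lemma rt_adj_sym: "(adj S inc)\<^sup>*\<^sup>* u w \<Longrightarrow> (adj S inc)\<^sup>*\<^sup>* w u"
proof (induction rule: rtranclp_induct)
  case base then show ?case by simp
next
  case (step y z) then show ?case
    by (meson adj_sym converse_rtranclp_into_rtranclp)
qed

lemma deg_insert: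
  assumes "finite S" "f \<notin> S"
  shows "degree (insert f S) inc v = degree S inc v
     + (if v \<in> inc f \<and> card (inc f) = 2 then 1 else 0) + (if inc f = {v} then 2 else 0)"
proof -
  have A: "{e \<in> insert f S. v \<in> inc e \<and> card (inc e) = 2} =
     (if v \<in> inc f \<and> card (inc f) = 2 then insert f {e \<in> S. v \<in> inc e \<and> card (inc e) = 2}
      else {e \<in> S. v \<in> inc e \<and> card (inc e) = 2})" by auto
  have B: "{e \<in> insert f S. inc e = {v}} =
     (if inc f = {v} then insert f {e \<in> S. inc e = {v}} else {e \<in> S. inc e = {v}})" by auto
  show ?thesis unfolding degree_def A B using assms by auto
qed

lemma deg_empty[simp]: "degree {} inc v = 0"
  by (simp add: degree_def)

lemma deg_mono: "S \<subseteq> T \<Longrightarrow> finite T \<Longrightarrow> degree S inc v \<le> degree T inc v"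
  unfolding degree_def
  by (intro add_mono mult_le_mono2 card_mono) auto

lemma deg_local: "S \<subseteq> T \<Longrightarrow> (\<forall>e\<in>T. v \<in> inc e \<longrightarrow> e \<in> S) \<Longrightarrow> degree S inc v = degree T inc v"
proof -
  assume a: "S \<subseteq> T" "\<forall>e\<in>T. v \<in> inc e \<longrightarrow> e \<in> S"
  have "{e \<in> S. v \<in> inc e \<and> card (inc e) = 2} = {e \<in> T. v \<in> inc e \<and> card (inc e) = 2}"
    using a by auto
  moreover have "{e \<in> S. inc e = {v}} = {e \<in> T. inc e = {v}}" using a by auto
  ultimately show ?thesis by (simp add: degree_def)
qed

lemma deg_zero: "v \<notin> VS inc S \<Longrightarrow> degree S inc v = 0"
proof -
  assume "v \<notin> VS inc S"
  then have h: "{e \<in> S. v \<in> inc e \<and> card (inc e) = 2} = {}" "{e \<in> S. inc e = {v}} = {}"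
    by (auto simp: VS_iff)
  show ?thesis unfolding degree_def by (simp only: h card.empty)
qed

definition ok :: "('e \<Rightarrow> 'v set) \<Rightarrow> 'e set \<Rightarrow> bool" where
  "ok inc S = (finite S \<and> (\<forall>e\<in>S. card (inc e) = 1 \<or> card (inc e) = 2))"

lemma ok_sub: "ok inc T \<Longrightarrow> S \<subseteq> T \<Longrightarrow> ok inc S"
  by (auto simp: ok_def intro: finite_subset)

lemma ok_fin_inc: "ok inc S \<Longrightarrow> e \<in> S \<Longrightarrow> finite (inc e)"
  unfolding ok_def by (metis card.infinite zero_neq_one zero_neq_numeral)

lemma ok_VS_fin: "ok inc S \<Longrightarrow> finite (VS inc S)"
  unfolding VS_def using ok_fin_inc[of inc S] by (intro finite_UN_I) (auto simp: ok_def)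

lemma card1_eq: "card A = 1 \<Longrightarrow> v \<in> A \<Longrightarrow> A = {v}"
  by (metis card_1_singletonE singletonD)

lemma deg_pos: "ok inc S \<Longrightarrow> v \<in> VS inc S \<Longrightarrow> 1 \<le> degree S inc v"
proof -
  assume o: "ok inc S" and v: "v \<in> VS inc S"
  then obtain e where e: "e \<in> S" "v \<in> inc e" by (auto simp: VS_iff)
  have fin: "finite S" using o by (simp add: ok_def)
  show ?thesis
  proof (cases "card (inc e) = 2")
    case True
    then have "e \<in> {e \<in> S. v \<in> inc e \<and> card (inc e) = 2}" using e by auto
    then have "card {e \<in> S. v \<in> inc e \<and> card (inc e) = 2} > 0"
      using fin by (subst card_gt_0_iff) auto
    then show ?thesis by (simp add: degree_def)
  next
    case False
    then have "card (inc e) = 1" using o e by (auto simp: ok_def)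
    then have "inc e = {v}" using e by (intro card1_eq)
    then have "e \<in> {e \<in> S. inc e = {v}}" using e by auto
    then have "card {e \<in> S. inc e = {v}} > 0"
      using fin by (subst card_gt_0_iff) auto
    then show ?thesis by (simp add: degree_def)
  qed
qed

lemma deg1:
  assumes "ok inc S" "degree S inc v = 1"
  shows "\<exists>e0\<in>S. card (inc e0) = 2 \<and> v \<in> inc e0 \<and> (\<forall>e\<in>S. v \<in> inc e \<longrightarrow> e = e0)"
proof -
  have fin: "finite S" using assms by (simp add: ok_def)
  have c: "card {e \<in> S. v \<in> inc e \<and> card (inc e) = 2} = 1" "card {e \<in> S. inc e = {v}} = 0"
    using assms(2) unfolding degree_def by arith+
  then obtain e0 where e0: "{e \<in> S. v \<in> inc e \<and> card (inc e) = 2} = {e0}"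
    by (meson card_1_singletonE)
  have B: "{e \<in> S. inc e = {v}} = {}" using c fin by simp
  show ?thesis
  proof (intro bexI[of _ e0] conjI ballI impI)
    show "e0 \<in> S" "card (inc e0) = 2" "v \<in> inc e0" using e0 by auto
  next
    fix e assume "e \<in> S" "v \<in> inc e"
    show "e = e0"
    proof (cases "card (inc e) = 2")
      case True then show ?thesis using e0 \<open>e \<in> S\<close> \<open>v \<in> inc e\<close> by auto
    next
      case False
      then have "card (inc e) = 1" using assms(1) \<open>e \<in> S\<close> by (auto simp: ok_def)
      then have "inc e = {v}" using \<open>v \<in> inc e\<close> by (intro card1_eq)
      then show ?thesis using B \<open>e \<in> S\<close> by auto
    qed
  qed
qed

lemma leaf_deg:
  assumes "leaf V S inc v"
  shows "degree S inc v = 1"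
proof -
  have L: "v \<in> V \<and> (\<exists>!e. e \<in> S \<and> v \<in> inc e) \<and> (\<forall>e\<in>S. v \<in> inc e \<longrightarrow> card (inc e) = 2)"
    using assms unfolding leaf_def by assumption
  note u = conjunct1[OF conjunct2[OF L]] and nl = conjunct2[OF conjunct2[OF L]]
  from u obtain e0 where e0: "e0 \<in> S \<and> v \<in> inc e0" and uu: "\<And>e. e \<in> S \<and> v \<in> inc e \<Longrightarrow> e = e0"
    by (metis u)
  have A: "{e \<in> S. v \<in> inc e \<and> card (inc e) = 2} = {e0}"
  proof
    show "{e \<in> S. v \<in> inc e \<and> card (inc e) = 2} \<subseteq> {e0}" using uu by blast
    show "{e0} \<subseteq> {e \<in> S. v \<in> inc e \<and> card (inc e) = 2}" using e0 nl by blast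
  qed
  have B: "{e \<in> S. inc e = {v}} = {}"
  proof (rule ccontr)
    assume "{e \<in> S. inc e = {v}} \<noteq> {}"
    then obtain e where "e \<in> S" "inc e = {v}" by blast
    then have "card (inc e) = 2" using nl by auto
    then show False using \<open>inc e = {v}\<close> by simp
  qed
  show ?thesis unfolding degree_def A B by simp
qed


lemma card_filter_sum: "finite S \<Longrightarrow> card {e \<in> S. P e} = (\<Sum>e\<in>S. if P e then 1 else 0)"
proof -
  assume f: "finite S"
  have "card {e \<in> S. P e} = sum (\<lambda>_. 1) {e \<in> S. P e}" by (rule card_eq_sum)
  also have "\<dots> = (\<Sum>e\<in>S. if P e then 1 else 0)" using f by (rule sum.inter_filter)
  finally show ?thesis .
qed

lemma handshake:
  assumes o: "ok inc S"
  shows "(\<Sum>v\<in>VS inc S. degree S inc v) = 2 * card S"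
proof -
  define w where "w e v = (if v \<in> inc e \<and> card (inc e) = 2 then 1 else 0) + (if inc e = {v} then 2 else (0::nat))" for e v
  have fin: "finite S" using o by (simp add: ok_def)
  have deg: "degree S inc v = (\<Sum>e\<in>S. w e v)" for v
  proof -
    have "degree S inc v = (\<Sum>e\<in>S. if v \<in> inc e \<and> card (inc e) = 2 then 1 else 0)
        + 2 * (\<Sum>e\<in>S. if inc e = {v} then 1 else 0)"
      unfolding degree_def using fin by (simp add: card_filter_sum)
    also have "\<dots> = (\<Sum>e\<in>S. w e v)"
      unfolding w_def sum.distrib sum_distrib_left by (intro arg_cong2[where f="(+)"] sum.cong) auto
    finally show ?thesis .
  qed
  have each: "(\<Sum>v\<in>VS inc S. w e v) = 2" if e: "e \<in> S" for e
  proof -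
    have sub: "inc e \<subseteq> VS inc S" using e by (auto simp: VS_def)
    have "(\<Sum>v\<in>VS inc S. w e v) = (\<Sum>v\<in>inc e. w e v)"
      using ok_VS_fin[OF o] sub by (intro sum.mono_neutral_right) (auto simp: w_def)
    also have "\<dots> = 2"
    proof (cases "card (inc e) = 2")
      case True
      then obtain p q where pq: "inc e = {p, q}" "p \<noteq> q" by (meson card_2_iff)
      have "w e p = 1" "w e q = 1" using True pq by (auto simp: w_def)
      then show ?thesis using pq by simp
    next
      case False
      then have "card (inc e) = 1" using o e by (auto simp: ok_def)
      then obtain p where p: "inc e = {p}" by (meson card_1_singletonE)
      then show ?thesis by (simp add: w_def)
    qed
    finally show ?thesis .
  qed
  have "(\<Sum>v\<in>VS inc S. degree S inc v) = (\<Sum>v\<in>VS inc S. \<Sum>e\<in>S. w e v)"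
    using deg by simp
  also have "\<dots> = (\<Sum>e\<in>S. \<Sum>v\<in>VS inc S. w e v)" by (rule sum.swap)
  also have "\<dots> = (\<Sum>e\<in>S. 2)" using each by simp
  also have "\<dots> = 2 * card S" by simp
  finally show ?thesis .
qed

lemma all2_excess:
  assumes o: "ok inc S" and d: "\<forall>v\<in>VS inc S. degree S inc v = 2"
  shows "card S = card (VS inc S)"
proof -
  have "2 * card S = (\<Sum>v\<in>VS inc S. degree S inc v)" using handshake[OF o] by simp
  also have "\<dots> = (\<Sum>v\<in>VS inc S. 2)" using d by simp
  also have "\<dots> = 2 * card (VS inc S)" by simp
  finally show ?thesis by simp
qed


lemma ok_insert: "ok inc (insert f S) \<Longrightarrow> ok inc S"
  by (erule ok_sub) auto

lemma lv_fin: "ok inc S \<Longrightarrow> finite (lv inc S)"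
  unfolding lv_def by (rule finite_subset[OF _ ok_VS_fin]) auto

lemma w_pos: "ok inc (insert f S) \<Longrightarrow> v \<in> inc f \<Longrightarrow>
   1 \<le> (if v \<in> inc f \<and> card (inc f) = 2 then 1 else 0) + (if inc f = {v} then 2 else (0::nat))"
proof -
  assume o: "ok inc (insert f S)" and v: "v \<in> inc f"
  then have "card (inc f) = 1 \<or> card (inc f) = 2" by (auto simp: ok_def)
  then show ?thesis
  proof
    assume "card (inc f) = 1"
    then have "inc f = {v}" using v by (rule card1_eq)
    then show ?thesis by simp
  next
    assume "card (inc f) = 2"
    then show ?thesis using v by simp
  qed
qed

lemma attach_close:
  assumes o: "ok inc (insert f S)" and f: "f \<notin> S" and sub: "inc f \<subseteq> VS inc S"
  shows "VS inc (insert f S) = VS inc S" "lv inc (insert f S) \<subseteq> lv inc S - inc f"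
proof -
  show V: "VS inc (insert f S) = VS inc S" using sub by auto
  have fin: "finite S" using o by (simp add: ok_def)
  show "lv inc (insert f S) \<subseteq> lv inc S - inc f"
  proof
    fix v assume v: "v \<in> lv inc (insert f S)"
    then have vV: "v \<in> VS inc S" and d: "degree (insert f S) inc v = 1" using V by (auto simp: lv_def)
    have d1: "1 \<le> degree S inc v" using deg_pos[OF ok_insert[OF o] vV] .
    show "v \<in> lv inc S - inc f"
    proof (cases "v \<in> inc f")
      case True
      then show ?thesis using d d1 deg_insert[OF fin f, of inc v] w_pos[OF o True] by simp
    next
      case False
      then have "degree (insert f S) inc v = degree S inc v"
        using deg_insert[OF fin f, of inc v] by auto
      then show ?thesis using d vV False by (simp add: lv_def)
    qed
  qed
qed

lemma attach_ext:
  assumes o: "ok inc (insert f S)" and f: "f \<notin> S" and fx: "inc f = {x, z}" "x \<noteq> z"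
    and x: "x \<in> VS inc S" and z: "z \<notin> VS inc S"
  shows "lv inc (insert f S) = insert z (lv inc S - {x})"
proof -
  have fin: "finite S" using o by (simp add: ok_def)
  have c2: "card (inc f) = 2" using fx by simp
  have dz: "degree (insert f S) inc z = 1"
    using deg_insert[OF fin f, of inc z] deg_zero[OF z] c2 fx by auto
  have dx: "degree (insert f S) inc x \<ge> 2"
    using deg_insert[OF fin f, of inc x] deg_pos[OF ok_insert[OF o] x] c2 fx by auto
  have oth: "degree (insert f S) inc v = degree S inc v" if "v \<noteq> x" "v \<noteq> z" for v
    using deg_insert[OF fin f, of inc v] fx that by auto
  show ?thesis
  proof (intro set_eqI iffI)
    fix v assume v: "v \<in> lv inc (insert f S)"
    show "v \<in> insert z (lv inc S - {x})"
      using v dx oth[of v] fx by (cases "v = z"; cases "v = x") (auto simp: lv_def)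
  next
    fix v assume v: "v \<in> insert z (lv inc S - {x})"
    show "v \<in> lv inc (insert f S)"
      using v dz oth[of v] fx z by (cases "v = z"; cases "v = x") (auto simp: lv_def)
  qed
qed

lemma attach_phi:
  assumes o: "ok inc (insert f S)" and f: "f \<notin> S" and x: "x \<in> inc f" "x \<in> VS inc S"
  shows "Phi inc (insert f S) \<le> Phi inc S + 1 - (if x \<in> lv inc S then 1 else 0)"
proof -
  have oS: "ok inc S" using ok_insert[OF o] .
  have fin: "finite S" using oS by (simp add: ok_def)
  have cE: "card (insert f S) = card S + 1" using fin f by simp
  have flv: "finite (lv inc S)" using lv_fin[OF oS] .
  have cx: "card (lv inc S - {x}) = card (lv inc S) - (if x \<in> lv inc S then 1 else 0)"
    by (simp add: card_Diff_singleton_if)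
  have cx2: "int (card (lv inc S - {x})) = int (card (lv inc S)) - (if x \<in> lv inc S then 1 else 0)"
  proof (cases "x \<in> lv inc S")
    case True
    then have "card (lv inc S) \<ge> 1" using flv by (metis One_nat_def Suc_leI card_gt_0_iff empty_iff)
    then show ?thesis using cx True by simp
  next
    case False then show ?thesis using cx by simp
  qed
  show ?thesis
  proof (cases "inc f \<subseteq> VS inc S")
    case True
    note C = attach_close[OF o f True]
    have "lv inc S - inc f \<subseteq> lv inc S - {x}" using x by auto
    then have "card (lv inc (insert f S)) \<le> card (lv inc S - {x})"
      using C(2) flv by (meson card_mono finite_Diff order_trans)
    then show ?thesis using cx2 cE C(1) unfolding Phi_def by (cases "x \<in> lv inc S"; simp; linarith)
  next
    case False
    then obtain z where z: "z \<in> inc f" "z \<notin> VS inc S" by auto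
    then have xz: "x \<noteq> z" using x by auto
    have c12: "card (inc f) = 1 \<or> card (inc f) = 2" using o by (auto simp: ok_def)
    have finf: "finite (inc f)" using ok_fin_inc[OF o] by simp
    have "card (inc f) \<noteq> 1" using card1_eq[of "inc f" x] x z xz by auto
    then have c2: "card (inc f) = 2" using c12 by simp
    have "{x, z} \<subseteq> inc f" using x z by auto
    moreover have "card {x, z} = card (inc f)" using c2 xz by simp
    ultimately have fxz: "inc f = {x, z}" using finf by (metis card_subset_eq)
    have L: "lv inc (insert f S) = insert z (lv inc S - {x})"
      using attach_ext[OF o f fxz xz x(2) z(2)] .
    have "z \<notin> lv inc S - {x}" using z by (auto simp: lv_def)
    then have cL: "card (lv inc (insert f S)) = card (lv inc S - {x}) + 1"
      using L flv by simp
    have "VS inc (insert f S) = insert z (VS inc S)" using fxz x by auto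
    then have cV: "card (VS inc (insert f S)) = card (VS inc S) + 1"
      using z ok_VS_fin[OF oS] by simp
    show ?thesis using cL cV cE cx2 unfolding Phi_def by (cases "x \<in> lv inc S"; simp; linarith)
  qed
qed


lemma conn_insert:
  assumes c: "conn inc T" and i: "inc f \<inter> VS inc T \<noteq> {}"
  shows "conn inc (insert f T)"
proof -
  let ?R = "adj (insert f T) inc"
  obtain x where x: "x \<in> inc f" "x \<in> VS inc T" using i by auto
  have m: "?R\<^sup>*\<^sup>* u w" if "(adj T inc)\<^sup>*\<^sup>* u w" for u w
    using rt_adj_mono[OF _ that] by blast
  have to: "?R\<^sup>*\<^sup>* y x \<and> ?R\<^sup>*\<^sup>* x y" if y: "y \<in> VS inc (insert f T)" for y
  proof (cases "y \<in> inc f")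
    case True
    then have "adj (insert f T) inc y x" "adj (insert f T) inc x y" using x by (auto simp: adj_def)
    then show ?thesis by auto
  next
    case False
    then have "y \<in> VS inc T" using y by auto
    then show ?thesis using c x m unfolding conn_def by blast
  qed
  show ?thesis unfolding conn_def
  proof (intro ballI)
    fix u w assume "u \<in> VS inc (insert f T)" "w \<in> VS inc (insert f T)"
    then have "?R\<^sup>*\<^sup>* u x" "?R\<^sup>*\<^sup>* x w" using to by blast+
    then show "?R\<^sup>*\<^sup>* u w" by (rule rtranclp_trans)
  qed
qed

lemma conn_single: "conn inc {f}"
  unfolding conn_def VS_def by (auto simp: adj_def)


lemma branchy_insert:
  assumes o: "ok inc (insert f T)" and b: "branchy inc T" and i: "inc f \<inter> VS inc T \<noteq> {}"
  shows "branchy inc (insert f T)"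
proof -
  let ?R = "adj (insert f T) inc"
  obtain x where x: "x \<in> inc f" "x \<in> VS inc T" using i by auto
  have fin: "finite (insert f T)" using o by (simp add: ok_def)
  have good: "\<exists>w. ?R\<^sup>*\<^sup>* v w \<and> 3 \<le> degree (insert f T) inc w" if v: "v \<in> VS inc T" for v
  proof -
    obtain w where w: "(adj T inc)\<^sup>*\<^sup>* v w" "3 \<le> degree T inc w" using b v unfolding branchy_def by blast
    have "degree T inc w \<le> degree (insert f T) inc w" by (rule deg_mono[OF _ fin]) auto
    moreover have "?R\<^sup>*\<^sup>* v w" by (rule rt_adj_mono[OF _ w(1)]) auto
    ultimately show ?thesis using w(2) by (intro exI[of _ w]) simp
  qed
  show ?thesis unfolding branchy_def
  proof
    fix v assume v: "v \<in> VS inc (insert f T)"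
    show "\<exists>w. ?R\<^sup>*\<^sup>* v w \<and> 3 \<le> degree (insert f T) inc w"
    proof (cases "v \<in> VS inc T")
      case True then show ?thesis using good by blast
    next
      case False
      then have "v \<in> inc f" using v by auto
      then have "?R v x" using x by (auto simp: adj_def)
      then show ?thesis using good[OF x(2)] by (meson converse_rtranclp_into_rtranclp)
    qed
  qed
qed


lemma cacti_crit:
  assumes g: "graph V E inc" and S: "S \<subseteq> E" and li: "LI inc S" and br: "branchy inc S"
  shows "cacti (VS inc S) S inc"
proof -
  have o: "ok inc S" using g S by (auto simp: graph_def ok_def intro: finite_subset)
  have gS: "graph (VS inc S) S inc"
    unfolding graph_def
  proof (intro conjI ballI)
    show "finite (VS inc S)" using ok_VS_fin[OF o] .
    show "finite S" using o by (simp add: ok_def)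
    fix e assume "e \<in> S"
    then show "inc e \<subseteq> VS inc S" by (auto simp: VS_def)
    show "card (inc e) = 1 \<or> card (inc e) = 2" using o \<open>e \<in> S\<close> by (simp add: ok_def)
  qed
  have ni: "\<not> isolated (VS inc S) S inc v" for v by (auto simp: isolated_def VS_iff)
  have nl: "\<not> leaf (VS inc S) S inc v" for v
  proof
    assume l: "leaf (VS inc S) S inc v"
    then have "v \<in> VS inc S" by (simp add: leaf_def)
    then show False using leaf_deg[OF l] li by (auto simp: LI_def)
  qed
  have nc: "\<not> is_cycle C {e \<in> S. inc e \<subseteq> C} inc" if C: "C \<in> components (VS inc S) S inc" for C
  proof
    assume cyc: "is_cycle C {e \<in> S. inc e \<subseteq> C} inc"
    obtain v where v: "v \<in> VS inc S" and Cv: "C = {w \<in> VS inc S. (adj S inc)\<^sup>*\<^sup>* v w}"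
      using C by (auto simp: components_def)
    obtain w where w: "(adj S inc)\<^sup>*\<^sup>* v w" "3 \<le> degree S inc w" using br v unfolding branchy_def by blast
    have wV: "w \<in> VS inc S" using w(2) deg_zero[of w inc S] by (cases "w \<in> VS inc S") auto
    then have wC: "w \<in> C" using Cv w by auto
    have loc: "\<forall>e\<in>S. w \<in> inc e \<longrightarrow> e \<in> {e \<in> S. inc e \<subseteq> C}"
    proof (intro ballI impI)
      fix e assume e: "e \<in> S" "w \<in> inc e"
      have "inc e \<subseteq> C"
      proof
        fix y assume y: "y \<in> inc e"
        then have "adj S inc w y" using e by (auto simp: adj_def)
        then have "(adj S inc)\<^sup>*\<^sup>* v y" using w(1) by (meson rtranclp.rtrancl_into_rtrancl)
        moreover have "y \<in> VS inc S" using y e by (auto simp: VS_iff)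
        ultimately show "y \<in> C" using Cv by auto
      qed
      then show "e \<in> {e \<in> S. inc e \<subseteq> C}" using e by auto
    qed
    have "degree {e \<in> S. inc e \<subseteq> C} inc w = degree S inc w"
      by (rule deg_local) (use loc in auto)
    then show False using cyc wC w(2) unfolding is_cycle_def by auto
  qed
  show ?thesis unfolding cacti_def using gS ni nl nc by (intro conjI allI ballI)
qed


locale CG =
  fixes V :: "'v set" and E :: "'e set" and inc :: "'e \<Rightarrow> 'v set"
  assumes cac: "cacti V E inc"
begin

lemma gr: "graph V E inc" using cac by (simp add: cacti_def)
lemma okE: "ok inc E" using gr by (simp add: graph_def ok_def)
lemma okS: "S \<subseteq> E \<Longrightarrow> ok inc S" by (rule ok_sub[OF okE])
lemma noleaf: "\<not> leaf V E inc v" using cac by (simp add: cacti_def)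
lemma VE: "VS inc E = V"
proof
  show "VS inc E \<subseteq> V"
  proof
    fix v assume "v \<in> VS inc E"
    then obtain e where "e \<in> E" "v \<in> inc e" by (auto simp: VS_iff)
    moreover have "\<forall>e\<in>E. inc e \<subseteq> V" using gr by (simp add: graph_def)
    ultimately show "v \<in> V" by blast
  qed
  show "V \<subseteq> VS inc E"
  proof
    fix v assume "v \<in> V"
    moreover have "\<not> isolated V E inc v" using cac by (simp add: cacti_def)
    ultimately show "v \<in> VS inc E" by (auto simp: isolated_def VS_iff)
  qed
qed
lemma VS_sub: "S \<subseteq> E \<Longrightarrow> VS inc S \<subseteq> V"
proof -
  assume "S \<subseteq> E"
  then have "VS inc S \<subseteq> VS inc E" by (rule VS_mono)
  then show ?thesis by (simp only: VE)
qed

lemma leaf_ext: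
  assumes S: "S \<subseteq> E" and x: "x \<in> VS inc S" and d: "degree S inc x = 1"
  shows "\<exists>f\<in>E. f \<notin> S \<and> x \<in> inc f"
proof (rule ccontr)
  assume "\<not> (\<exists>f\<in>E. f \<notin> S \<and> x \<in> inc f)"
  then have all: "\<And>f. f \<in> E \<Longrightarrow> x \<in> inc f \<Longrightarrow> f \<in> S" by blast
  from deg1[OF okS[OF S] d] obtain e0 where e0: "e0 \<in> S" "card (inc e0) = 2" "x \<in> inc e0"
     and un: "\<forall>e\<in>S. x \<in> inc e \<longrightarrow> e = e0"
    by blast
  have xV: "x \<in> V" using VS_sub[OF S] x by auto
  have e0E: "e0 \<in> E" using e0(1) S by auto
  have un2: "e = e0" if "e \<in> E" "x \<in> inc e" for e
  proof -
    have "e \<in> S" using all that by blast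
    then show ?thesis using un that(2) by blast
  qed
  have u: "\<exists>!e. e \<in> E \<and> x \<in> inc e"
    using e0E e0(3) un2 by blast
  have c: "\<forall>e\<in>E. x \<in> inc e \<longrightarrow> card (inc e) = 2"
  proof (intro ballI impI)
    fix e assume "e \<in> E" "x \<in> inc e"
    then have "e = e0" by (rule un2)
    then show "card (inc e) = 2" using e0(2) by simp
  qed
  have "leaf V E inc x" unfolding leaf_def using xV u c by (intro conjI)
  then show False using noleaf by blast
qed

lemma grow:
  assumes Qp: "\<And>T f. Q T \<Longrightarrow> T \<subseteq> E \<Longrightarrow> f \<in> E \<Longrightarrow> f \<notin> T \<Longrightarrow> inc f \<inter> VS inc T \<noteq> {} \<Longrightarrow> Q (insert f T)"
  shows "S \<subseteq> E \<Longrightarrow> Q S \<Longrightarrow> Phi inc S \<le> c \<Longrightarrow>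
     \<exists>S'. S \<subseteq> S' \<and> S' \<subseteq> E \<and> Q S' \<and> LI inc S' \<and> excess (VS inc S') S' \<le> c"
proof (induction "card (E - S)" arbitrary: S rule: less_induct)
  case less
  show ?case
  proof (cases "LI inc S")
    case True
    then have "lv inc S = {}" by (auto simp: LI_def lv_def)
    then have "excess (VS inc S) S = Phi inc S" by (simp add: Phi_def excess_def)
    then show ?thesis using less(2,3,4) True by (intro exI[of _ S]) auto
  next
    case False
    then obtain x where x: "x \<in> VS inc S" "degree S inc x = 1" by (auto simp: LI_def)
    obtain f where f: "f \<in> E" "f \<notin> S" "x \<in> inc f" using leaf_ext[OF less(2) x] by blast
    have xl: "x \<in> lv inc S" using x by (simp add: lv_def)
    have o: "ok inc (insert f S)" using okS f less(2) by auto
    have "Phi inc (insert f S) \<le> Phi inc S" using attach_phi[OF o f(2) f(3) x(1)] xl by simp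
    then have P: "Phi inc (insert f S) \<le> c" using less(4) by simp
    have Q: "Q (insert f S)" using Qp[OF less(3) less(2) f(1) f(2)] f(3) x(1) by auto
    have sub: "insert f S \<subseteq> E" using less(2) f by auto
    have ps: "E - insert f S \<subset> E - S" using f by auto
    have "finite (E - S)" using okE by (auto simp: ok_def)
    then have "card (E - insert f S) < card (E - S)" using ps by (rule psubset_card_mono)
    then obtain S' where "insert f S \<subseteq> S'" "S' \<subseteq> E" "Q S'" "LI inc S'" "excess (VS inc S') S' \<le> c"
      using less(1)[OF _ sub Q P] by blast
    then show ?thesis by (intro exI[of _ S']) auto
  qed
qed

end




lemma ok_inc_ne: "ok inc S \<Longrightarrow> e \<in> S \<Longrightarrow> inc e \<noteq> {}"
  unfolding ok_def by fastforce

lemma conn_branchy: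
  assumes c: "conn inc N" and w: "w \<in> VS inc N" "3 \<le> degree N inc w"
  shows "branchy inc N"
  unfolding branchy_def
proof
  fix v assume "v \<in> VS inc N"
  then have "(adj N inc)\<^sup>*\<^sup>* v w" using c w(1) unfolding conn_def by blast
  then show "\<exists>w. (adj N inc)\<^sup>*\<^sup>* v w \<and> 3 \<le> degree N inc w" using w(2) by blast
qed

lemma phi_single:
  assumes o: "ok inc {a}" and x: "x \<in> inc a"
  shows "Phi inc {a} + (if degree {a} inc x = 1 then 0 else 1) \<le> 1"
proof -
  have dg: "degree {a} inc v = (if v \<in> inc a \<and> card (inc a) = 2 then 1 else 0) + (if inc a = {v} then 2 else 0)" for v
    using deg_insert[of "{}" a inc v] by simp
  have V: "VS inc {a} = inc a" by (simp add: VS_def)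
  have c: "card (inc a) = 1 \<or> card (inc a) = 2" using o by (simp add: ok_def)
  then show ?thesis
  proof
    assume c1: "card (inc a) = 1"
    then obtain p where p: "inc a = {p}" by (meson card_1_singletonE)
    have "lv inc {a} = {}" unfolding lv_def V using dg p by auto
    then show ?thesis unfolding Phi_def V using p x dg by simp
  next
    assume c2: "card (inc a) = 2"
    then obtain p q where pq: "inc a = {p, q}" "p \<noteq> q" by (meson card_2_iff)
    have d1: "degree {a} inc v = 1" if "v \<in> inc a" for v using dg[of v] that c2 pq by auto
    have "lv inc {a} = inc a" unfolding lv_def V using d1 by auto
    then show ?thesis unfolding Phi_def V using c2 d1[OF x] by simp
  qed
qed

lemma phi_single': "ok inc {a} \<Longrightarrow> Phi inc {a} \<le> 1"
proof -
  assume o: "ok inc {a}"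
  then obtain x where "x \<in> inc a" using ok_inc_ne[OF o] by blast
  then show ?thesis using phi_single[OF o] by (smt (verit))
qed

context CG
begin

lemma closed_reach:
  assumes cl: "\<forall>g\<in>E. inc g \<inter> VS inc S \<noteq> {} \<longrightarrow> g \<in> S"
  shows "(adj E inc)\<^sup>*\<^sup>* z u \<Longrightarrow> z \<in> VS inc S \<Longrightarrow> u \<in> VS inc S"
proof (induction rule: rtranclp_induct)
  case base then show ?case .
next
  case (step y u)
  then have y: "y \<in> VS inc S" by blast
  from step(2) obtain g where g: "g \<in> E" "y \<in> inc g" "u \<in> inc g" by (auto simp: adj_def)
  then have "g \<in> S" using cl y by blast
  then show ?case using g by (auto simp: VS_iff)
qed

lemma cyc_fix:
  assumes S: "S \<subseteq> E" "S \<noteq> {}" and c: "conn inc S" and d2: "\<forall>v\<in>VS inc S. degree S inc v = 2"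
  shows "\<exists>f\<in>E. f \<notin> S \<and> inc f \<inter> VS inc S \<noteq> {}"
proof (rule ccontr)
  assume "\<not> ?thesis"
  then have cl: "\<forall>g\<in>E. inc g \<inter> VS inc S \<noteq> {} \<longrightarrow> g \<in> S" by blast
  obtain e where e: "e \<in> S" using S by blast
  obtain v where v: "v \<in> inc e" using ok_inc_ne[OF okS[OF S(1)] e] by blast
  have vS: "v \<in> VS inc S" using e v by (auto simp: VS_iff)
  have vV: "v \<in> V" using VS_sub[OF S(1)] vS by blast
  define C where "C = {w \<in> V. (adj E inc)\<^sup>*\<^sup>* v w}"
  have Cc: "C \<in> components V E inc" unfolding components_def C_def using vV by blast
  have CV: "C = VS inc S"
  proof
    show "C \<subseteq> VS inc S" unfolding C_def using closed_reach[OF cl] vS by blast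
    show "VS inc S \<subseteq> C"
    proof
      fix w assume w: "w \<in> VS inc S"
      then have "(adj S inc)\<^sup>*\<^sup>* v w" using c vS unfolding conn_def by blast
      then have "(adj E inc)\<^sup>*\<^sup>* v w" by (rule rt_adj_mono[OF S(1)])
      moreover have "w \<in> V" using VS_sub[OF S(1)] w by blast
      ultimately show "w \<in> C" unfolding C_def by blast
    qed
  qed
  have EC: "{e \<in> E. inc e \<subseteq> C} = S"
  proof
    show "{e \<in> E. inc e \<subseteq> C} \<subseteq> S"
    proof
      fix g assume g: "g \<in> {e \<in> E. inc e \<subseteq> C}"
      then have "inc g \<noteq> {}" using ok_inc_ne[OF okE] by blast
      then have "inc g \<inter> VS inc S \<noteq> {}" using g CV by blast
      then show "g \<in> S" using cl g by blast
    qed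
    show "S \<subseteq> {e \<in> E. inc e \<subseteq> C}" using S(1) CV by (auto simp: VS_iff)
  qed
  have "is_cycle C {e \<in> E. inc e \<subseteq> C} inc"
    unfolding is_cycle_def connected_graph_def EC
  proof (intro conjI ballI)
    show "C \<noteq> {}" using CV vS by blast
    fix u w assume "u \<in> C" "w \<in> C"
    then show "(adj S inc)\<^sup>*\<^sup>* u w" using c CV unfolding conn_def by blast
  next
    fix u assume "u \<in> C"
    then show "degree S inc u = 2" using d2 CV by blast
  qed
  moreover have "\<forall>C\<in>components V E inc. \<not> is_cycle C {e \<in> E. inc e \<subseteq> C} inc"
    using cac by (simp add: cacti_def)
  ultimately show False using Cc by blast
qed

lemma conn_Qp: "conn inc T \<Longrightarrow> T \<subseteq> E \<Longrightarrow> f \<in> E \<Longrightarrow> f \<notin> T \<Longrightarrow> inc f \<inter> VS inc T \<noteq> {} \<Longrightarrow> conn inc (insert f T)"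
  by (rule conn_insert)

lemma branchy_Qp: "branchy inc T \<Longrightarrow> T \<subseteq> E \<Longrightarrow> f \<in> E \<Longrightarrow> f \<notin> T \<Longrightarrow> inc f \<inter> VS inc T \<noteq> {} \<Longrightarrow> branchy inc (insert f T)"
  by (rule branchy_insert[OF okS]) auto

lemma finish:
  assumes S0: "S0 \<subseteq> E" "S0 \<noteq> {}" and c0: "conn inc S0" and p0: "Phi inc S0 \<le> 1"
  shows "\<exists>N. S0 \<subseteq> N \<and> N \<subseteq> E \<and> conn inc N \<and> LI inc N \<and> branchy inc N \<and> excess (VS inc N) N \<le> 1"
proof -
  obtain S1 where S1: "S0 \<subseteq> S1" "S1 \<subseteq> E" "conn inc S1" "LI inc S1" "excess (VS inc S1) S1 \<le> 1"
    using grow[of "conn inc", OF conn_Qp S0(1) c0 p0] by blast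
  show ?thesis
  proof (cases "\<exists>w\<in>VS inc S1. 3 \<le> degree S1 inc w")
    case True
    then have "branchy inc S1" using conn_branchy[OF S1(3)] by blast
    then show ?thesis using S1 by blast
  next
    case False
    have o1: "ok inc S1" using okS[OF S1(2)] .
    have d2: "\<forall>v\<in>VS inc S1. degree S1 inc v = 2"
    proof
      fix v assume v: "v \<in> VS inc S1"
      have "degree S1 inc v \<ge> 1" using deg_pos[OF o1 v] .
      moreover have "degree S1 inc v \<noteq> 1" using S1(4) v by (simp add: LI_def)
      moreover have "\<not> 3 \<le> degree S1 inc v" using False v by blast
      ultimately show "degree S1 inc v = 2" by linarith
    qed
    have ne: "S1 \<noteq> {}" using S0(2) S1(1) by blast
    obtain f where f: "f \<in> E" "f \<notin> S1" "inc f \<inter> VS inc S1 \<noteq> {}"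
      using cyc_fix[OF S1(2) ne S1(3) d2] by blast
    obtain x where x: "x \<in> inc f" "x \<in> VS inc S1" using f(3) by blast
    have sub2: "insert f S1 \<subseteq> E" using f S1(2) by blast
    have o2: "ok inc (insert f S1)" by (rule okS[OF sub2])
    have cE: "card S1 = card (VS inc S1)" using all2_excess[OF o1 d2] .
    have lv0: "lv inc S1 = {}" using S1(4) by (auto simp: LI_def lv_def)
    have "Phi inc S1 = 0" unfolding Phi_def lv0 using cE by simp
    then have p2: "Phi inc (insert f S1) \<le> 1" using attach_phi[OF o2 f(2) x] lv0 by simp
    have c2: "conn inc (insert f S1)" using conn_insert[OF S1(3) f(3)] .
    obtain S3 where S3: "insert f S1 \<subseteq> S3" "S3 \<subseteq> E" "conn inc S3" "LI inc S3" "excess (VS inc S3) S3 \<le> 1"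
      using grow[of "conn inc", OF conn_Qp sub2 c2 p2] by blast
    have fin1: "finite S1" using o1 by (simp add: ok_def)
    have dx: "degree S1 inc x = 2" using d2 x(2) by blast
    have "degree (insert f S1) inc x \<ge> 3"
      using deg_insert[OF fin1 f(2), of inc x] w_pos[OF o2 x(1)] dx by linarith
    moreover have fin3: "finite S3" using okS[OF S3(2)] by (simp add: ok_def)
    have "degree (insert f S1) inc x \<le> degree S3 inc x"
      by (rule deg_mono[OF S3(1) fin3])
    moreover have xS3: "x \<in> VS inc S3" using x S3(1) by (auto simp: VS_iff)
    ultimately have "3 \<le> degree S3 inc x" by linarith
    then have "branchy inc S3" by (rule conn_branchy[OF S3(3) xS3])
    moreover have "S0 \<subseteq> S3" using S1(1) S3(1) by blast
    ultimately show ?thesis using S3(2-5) by (intro exI[of _ S3]) simp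
  qed
qed

end



context CG
begin

lemma path_phase:
  assumes bE: "b \<in> E"
  shows "\<forall>S x. S \<subseteq> E \<longrightarrow> conn inc S \<longrightarrow> x \<in> VS inc S \<longrightarrow>
     (\<exists>y\<in>inc b. (adj E inc ^^ n) y x) \<longrightarrow>
     (\<forall>z\<in>VS inc S. \<forall>m<n. \<not> (\<exists>y\<in>inc b. (adj E inc ^^ m) y z)) \<longrightarrow>
     Phi inc S + (if degree S inc x = 1 then 0 else 1) \<le> 1 \<longrightarrow>
     (\<exists>S'. S \<subseteq> S' \<and> S' \<subseteq> E \<and> b \<in> S' \<and> conn inc S' \<and> Phi inc S' \<le> 1)"
proof (induction n)
  case 0
  show ?case
  proof (intro allI impI)
    fix S x
    assume S: "S \<subseteq> E" and c: "conn inc S" and x: "x \<in> VS inc S"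
      and nr: "\<exists>y\<in>inc b. (adj E inc ^^ 0) y x"
      and p: "Phi inc S + (if degree S inc x = 1 then 0 else 1) \<le> 1"
    have xb: "x \<in> inc b" using nr by auto
    show "\<exists>S'. S \<subseteq> S' \<and> S' \<subseteq> E \<and> b \<in> S' \<and> conn inc S' \<and> Phi inc S' \<le> 1"
    proof (cases "b \<in> S")
      case True
      have "Phi inc S \<le> 1" using p by (smt (verit))
      then show ?thesis using S c True by blast
    next
      case False
      have sub: "insert b S \<subseteq> E" using S bE by blast
      have o: "ok inc (insert b S)" by (rule okS[OF sub])
      have "Phi inc (insert b S) \<le> Phi inc S + 1 - (if x \<in> lv inc S then 1 else 0)"
        by (rule attach_phi[OF o False xb x])
      moreover have "(x \<in> lv inc S) = (degree S inc x = 1)" using x by (simp add: lv_def)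
      ultimately have "Phi inc (insert b S) \<le> 1" using p by (smt (verit))
      moreover have "conn inc (insert b S)" using conn_insert[OF c] xb x by blast
      ultimately show ?thesis using sub by (intro exI[of _ "insert b S"]) auto
    qed
  qed
next
  case (Suc n)
  show ?case
  proof (intro allI impI)
    fix S x
    assume S: "S \<subseteq> E" and c: "conn inc S" and x: "x \<in> VS inc S"
      and nr: "\<exists>y\<in>inc b. (adj E inc ^^ Suc n) y x"
      and far: "\<forall>z\<in>VS inc S. \<forall>m<Suc n. \<not> (\<exists>y\<in>inc b. (adj E inc ^^ m) y z)"
      and p: "Phi inc S + (if degree S inc x = 1 then 0 else 1) \<le> 1"
    obtain y where y: "y \<in> inc b" "(adj E inc ^^ Suc n) y x" using nr by (rule bexE)
    from y(2) obtain z where z: "(adj E inc ^^ n) y z" "adj E inc z x" by (rule relpowp_Suc_E)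
    have zS: "z \<notin> VS inc S" using far z(1) y(1) by blast
    have zx: "z \<noteq> x" using zS x by blast
    obtain f where f: "f \<in> E" "z \<in> inc f" "x \<in> inc f" using z(2) by (auto simp: adj_def)
    have fS: "f \<notin> S" using f(2) zS by (auto simp: VS_iff)
    have sub: "insert f S \<subseteq> E" using S f by blast
    have o: "ok inc (insert f S)" by (rule okS[OF sub])
    have finf: "finite (inc f)" using ok_fin_inc[OF okE f(1)] .
    have "card {x, z} \<le> card (inc f)" using f finf by (intro card_mono) auto
    moreover have "card (inc f) \<le> 2" using okE f(1) by (auto simp: ok_def)
    ultimately have c2: "card (inc f) = 2" using zx by simp
    have fxz: "inc f = {x, z}" using c2 zx f finf
      by (metis card_2_iff doubleton_eq_iff insertE singletonD)
    have "Phi inc (insert f S) \<le> Phi inc S + 1 - (if x \<in> lv inc S then 1 else 0)"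
      by (rule attach_phi[OF o fS f(3) x])
    moreover have "(x \<in> lv inc S) = (degree S inc x = 1)" using x by (simp add: lv_def)
    ultimately have p1: "Phi inc (insert f S) \<le> 1" using p by (smt (verit))
    have fin: "finite S" using okS[OF S] by (simp add: ok_def)
    have dz: "degree (insert f S) inc z = 1"
      using deg_insert[OF fin fS, of inc z] deg_zero[OF zS] c2 f(2) fxz zx by auto
    have c': "conn inc (insert f S)" using conn_insert[OF c] f(3) x by blast
    have z': "z \<in> VS inc (insert f S)" using f(2) by simp
    have nz: "\<exists>y\<in>inc b. (adj E inc ^^ n) y z" using y z by blast
    have far': "\<forall>z'\<in>VS inc (insert f S). \<forall>m<n. \<not> (\<exists>y\<in>inc b. (adj E inc ^^ m) y z')"
    proof (intro ballI allI impI)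
      fix z' m assume z': "z' \<in> VS inc (insert f S)" and m: "m < n"
      show "\<not> (\<exists>y\<in>inc b. (adj E inc ^^ m) y z')"
      proof
        assume "\<exists>y\<in>inc b. (adj E inc ^^ m) y z'"
        then obtain y' where y': "y' \<in> inc b" "(adj E inc ^^ m) y' z'" by blast
        show False
        proof (cases "z' \<in> VS inc S")
          case True
          then show False using far y' m by auto
        next
          case False
          then have "z' = z" using z' fxz x by auto
          then have "(adj E inc ^^ Suc m) y' x" using y'(2) z(2) by (meson relpowp_Suc_I)
          moreover have "\<not> (\<exists>y\<in>inc b. (adj E inc ^^ Suc m) y x)"
            using spec[OF bspec[OF far x], of "Suc m"] Suc_mono[OF m] by (rule mp)
          ultimately show False using y'(1) by blast
        qed
      qed
    qed
    have p1': "Phi inc (insert f S) + (if degree (insert f S) inc z = 1 then 0 else 1) \<le> 1"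
      using p1 dz by simp
    obtain S' where S': "insert f S \<subseteq> S'" "S' \<subseteq> E" "b \<in> S'" "conn inc S'" "Phi inc S' \<le> 1"
      using Suc.IH[rule_format, OF sub c' z' nz far'[rule_format] p1'] by blast
    then show "\<exists>S'. S \<subseteq> S' \<and> S' \<subseteq> E \<and> b \<in> S' \<and> conn inc S' \<and> Phi inc S' \<le> 1"
      by (intro exI[of _ S']) auto
  qed
qed

lemma same_comp_reach:
  assumes "same_component V E inc a b" "a \<in> E" "b \<in> E"
  shows "\<exists>u\<in>inc a. \<exists>w\<in>inc b. (adj E inc)\<^sup>*\<^sup>* w u"
proof -
  obtain C where C: "C \<in> components V E inc" "inc a \<subseteq> C" "inc b \<subseteq> C"
    using assms(1) by (auto simp: same_component_def)
  obtain v where Cv: "C = {w \<in> V. (adj E inc)\<^sup>*\<^sup>* v w}" using C(1) by (auto simp: components_def)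
  obtain u where u: "u \<in> inc a" using ok_inc_ne[OF okE assms(2)] by blast
  obtain w where w: "w \<in> inc b" using ok_inc_ne[OF okE assms(3)] by blast
  have "(adj E inc)\<^sup>*\<^sup>* v u" "(adj E inc)\<^sup>*\<^sup>* v w" using u w C Cv by auto
  then have "(adj E inc)\<^sup>*\<^sup>* w u" by (meson rt_adj_sym rtranclp_trans)
  then show ?thesis using u w by blast
qed

lemma reach_same:
  assumes "u \<in> inc a" "w \<in> inc b" "(adj E inc)\<^sup>*\<^sup>* u w" "a \<in> E" "b \<in> E"
  shows "same_component V E inc a b"
proof -
  have "u \<in> VS inc E" using assms(1,4) by (auto simp: VS_iff)
  then have uV: "u \<in> V" using VE by simp
  define C where "C = {y \<in> V. (adj E inc)\<^sup>*\<^sup>* u y}"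
  have Cc: "C \<in> components V E inc" unfolding components_def C_def using uV by blast
  have a: "inc a \<subseteq> C"
  proof
    fix y assume y: "y \<in> inc a"
    then have "adj E inc u y" using assms(1,4) by (auto simp: adj_def)
    moreover have "y \<in> V" using y assms(4) VE by (auto simp: VS_iff)
    ultimately show "y \<in> C" unfolding C_def by auto
  qed
  have b: "inc b \<subseteq> C"
  proof
    fix y assume y: "y \<in> inc b"
    then have "adj E inc w y" using assms(2,5) by (auto simp: adj_def)
    then have "(adj E inc)\<^sup>*\<^sup>* u y" using assms(3) by (meson rtranclp.rtrancl_into_rtrancl)
    moreover have "y \<in> V" using y assms(5) VE by (auto simp: VS_iff)
    ultimately show "y \<in> C" unfolding C_def by auto
  qed
  show ?thesis unfolding same_component_def using Cc a b by blast
qed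

end



context CG
begin

lemma union_good:
  assumes A: "A \<subseteq> E" and B: "B \<subseteq> E" and d: "VS inc A \<inter> VS inc B = {}"
    and la: "LI inc A" and lb: "LI inc B" and ba: "branchy inc A" and bb: "branchy inc B"
  shows "LI inc (A \<union> B) \<and> branchy inc (A \<union> B) \<and>
         excess (VS inc (A \<union> B)) (A \<union> B) = excess (VS inc A) A + excess (VS inc B) B"
proof -
  have oA: "ok inc A" by (rule okS[OF A])
  have oB: "ok inc B" by (rule okS[OF B])
  have AB: "A \<union> B \<subseteq> E" using A B by blast
  have finAB: "finite (A \<union> B)" using okS[OF AB] by (simp add: ok_def)
  have dE: "A \<inter> B = {}"
  proof (rule ccontr)
    assume "A \<inter> B \<noteq> {}"
    then obtain e where e: "e \<in> A" "e \<in> B" by blast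
    obtain v where "v \<in> inc e" using ok_inc_ne[OF oA e(1)] by blast
    then have "v \<in> VS inc A" "v \<in> VS inc B" using e by (auto simp: VS_iff)
    then show False using d by blast
  qed
  have dA: "degree (A \<union> B) inc v = degree A inc v" if v: "v \<in> VS inc A" for v
  proof (rule sym, rule deg_local)
    show "A \<subseteq> A \<union> B" by blast
    show "\<forall>e\<in>A \<union> B. v \<in> inc e \<longrightarrow> e \<in> A"
    proof (intro ballI impI)
      fix e assume e: "e \<in> A \<union> B" "v \<in> inc e"
      show "e \<in> A"
      proof (rule ccontr)
        assume "e \<notin> A"
        then have "e \<in> B" using e by blast
        then have "v \<in> VS inc B" using e by (auto simp: VS_iff)
        then show False using d v by blast
      qed
    qed
  qed
  have dB: "degree (A \<union> B) inc v = degree B inc v" if v: "v \<in> VS inc B" for v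
  proof (rule sym, rule deg_local)
    show "B \<subseteq> A \<union> B" by blast
    show "\<forall>e\<in>A \<union> B. v \<in> inc e \<longrightarrow> e \<in> B"
    proof (intro ballI impI)
      fix e assume e: "e \<in> A \<union> B" "v \<in> inc e"
      show "e \<in> B"
      proof (rule ccontr)
        assume "e \<notin> B"
        then have "e \<in> A" using e by blast
        then have "v \<in> VS inc A" using e by (auto simp: VS_iff)
        then show False using d v by blast
      qed
    qed
  qed
  have LI: "LI inc (A \<union> B)"
    unfolding LI_def
  proof
    fix v assume "v \<in> VS inc (A \<union> B)"
    then have "v \<in> VS inc A \<or> v \<in> VS inc B" by (simp add: VS_union)
    then show "degree (A \<union> B) inc v \<noteq> 1"
    proof
      assume v: "v \<in> VS inc A" then show ?thesis using dA[OF v] la by (simp add: LI_def)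
    next
      assume v: "v \<in> VS inc B" then show ?thesis using dB[OF v] lb by (simp add: LI_def)
    qed
  qed
  have br: "\<exists>w. (adj (A \<union> B) inc)\<^sup>*\<^sup>* v w \<and> 3 \<le> degree (A \<union> B) inc w"
    if bX: "branchy inc X" and X: "X \<subseteq> A \<union> B" and v: "v \<in> VS inc X" for X v
  proof -
    obtain w where w: "(adj X inc)\<^sup>*\<^sup>* v w" "3 \<le> degree X inc w" using bX v unfolding branchy_def by blast
    have "(adj (A \<union> B) inc)\<^sup>*\<^sup>* v w" by (rule rt_adj_mono[OF X w(1)])
    moreover have "degree X inc w \<le> degree (A \<union> B) inc w" by (rule deg_mono[OF X finAB])
    ultimately show ?thesis using w(2) by (intro exI[of _ w]) simp
  qed
  have BR: "branchy inc (A \<union> B)"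
    unfolding branchy_def
  proof
    fix v assume "v \<in> VS inc (A \<union> B)"
    then have "v \<in> VS inc A \<or> v \<in> VS inc B" by (simp add: VS_union)
    then show "\<exists>w. (adj (A \<union> B) inc)\<^sup>*\<^sup>* v w \<and> 3 \<le> degree (A \<union> B) inc w"
    proof
      assume v: "v \<in> VS inc A" show ?thesis by (rule br[OF ba _ v]) blast
    next
      assume v: "v \<in> VS inc B" show ?thesis by (rule br[OF bb _ v]) blast
    qed
  qed
  have fA: "finite A" "finite B" using oA oB by (simp_all add: ok_def)
  have cE: "card (A \<union> B) = card A + card B" using fA dE by (simp add: card_Un_disjoint)
  have cV: "card (VS inc (A \<union> B)) = card (VS inc A) + card (VS inc B)"
    unfolding VS_union using ok_VS_fin[OF oA] ok_VS_fin[OF oB] d by (simp add: card_Un_disjoint)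
  have "excess (VS inc (A \<union> B)) (A \<union> B) = excess (VS inc A) A + excess (VS inc B) B"
    unfolding excess_def cE cV by simp
  then show ?thesis using LI BR by blast
qed

lemma upstep:
  assumes S: "S \<subseteq> E" and li: "LI inc S" and bs: "branchy inc S" and ne: "S \<noteq> E"
  shows "\<exists>S'. S \<subset> S' \<and> S' \<subseteq> E \<and> LI inc S' \<and> branchy inc S' \<and>
              excess (VS inc S') S' \<le> excess (VS inc S) S + 1"
proof (cases "\<exists>f\<in>E. f \<notin> S \<and> inc f \<inter> VS inc S \<noteq> {}")
  case True
  then obtain f where f: "f \<in> E" "f \<notin> S" "inc f \<inter> VS inc S \<noteq> {}" by blast
  obtain x where x: "x \<in> inc f" "x \<in> VS inc S" using f(3) by blast
  have sub: "insert f S \<subseteq> E" using S f by blast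
  have o: "ok inc (insert f S)" by (rule okS[OF sub])
  have lv0: "lv inc S = {}" using li by (auto simp: LI_def lv_def)
  have "Phi inc (insert f S) \<le> Phi inc S + 1" using attach_phi[OF o f(2) x] lv0 by simp
  moreover have "Phi inc S = excess (VS inc S) S" by (simp add: Phi_def excess_def lv0)
  ultimately have p: "Phi inc (insert f S) \<le> excess (VS inc S) S + 1" by simp
  have b1: "branchy inc (insert f S)" by (rule branchy_insert[OF o bs f(3)])
  obtain S' where S': "insert f S \<subseteq> S'" "S' \<subseteq> E" "branchy inc S'" "LI inc S'"
     "excess (VS inc S') S' \<le> excess (VS inc S) S + 1"
    using grow[of "branchy inc", OF branchy_Qp sub b1 p] by blast
  have "S \<subset> S'" using S'(1) f(2) by blast
  then show ?thesis using S'(2-5) by (intro exI[of _ S']) simp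
next
  case False
  then have cl: "\<forall>g\<in>E. inc g \<inter> VS inc S \<noteq> {} \<longrightarrow> g \<in> S" by blast
  obtain f where f: "f \<in> E" "f \<notin> S" using S ne by blast
  have f1: "{f} \<subseteq> E" using f(1) by blast
  have o1: "ok inc {f}" by (rule okS[OF f1])
  have fne: "{f} \<noteq> {}" by blast
  obtain N where N: "{f} \<subseteq> N" "N \<subseteq> E" "conn inc N" "LI inc N" "branchy inc N" "excess (VS inc N) N \<le> 1"
    using finish[OF f1 fne conn_single phi_single'[OF o1]] by blast
  obtain u where u: "u \<in> inc f" using ok_inc_ne[OF okE f(1)] by blast
  have d: "VS inc S \<inter> VS inc N = {}"
  proof (rule ccontr)
    assume "VS inc S \<inter> VS inc N \<noteq> {}"
    then obtain z where z: "z \<in> VS inc S" "z \<in> VS inc N" by blast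
    have uN: "u \<in> VS inc N" using u N(1) by (auto simp: VS_iff)
    have "(adj N inc)\<^sup>*\<^sup>* z u" using N(3) z(2) uN unfolding conn_def by blast
    then have "(adj E inc)\<^sup>*\<^sup>* z u" by (rule rt_adj_mono[OF N(2)])
    then have "u \<in> VS inc S" using closed_reach[OF cl] z(1) by blast
    then have "f \<in> S" using cl f(1) u by blast
    then show False using f(2) by blast
  qed
  have U: "LI inc (S \<union> N) \<and> branchy inc (S \<union> N) \<and>
         excess (VS inc (S \<union> N)) (S \<union> N) = excess (VS inc S) S + excess (VS inc N) N"
    by (rule union_good[OF S N(2) d li N(4) bs N(5)])
  have "S \<subset> S \<union> N" using N(1) f(2) by blast
  moreover have "S \<union> N \<subseteq> E" using S N(2) by blast
  moreover have "excess (VS inc (S \<union> N)) (S \<union> N) \<le> excess (VS inc S) S + 1" using U N(6) by linarith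
  ultimately show ?thesis using U by (intro exI[of _ "S \<union> N"]) simp
qed

lemma ivt:
  shows "\<forall>S. card (E - S) = n \<longrightarrow> S \<subseteq> E \<longrightarrow> LI inc S \<longrightarrow> branchy inc S \<longrightarrow>
     excess (VS inc S) S \<le> k \<longrightarrow> k \<le> excess V E \<longrightarrow>
     (\<exists>S'. S \<subseteq> S' \<and> S' \<subseteq> E \<and> LI inc S' \<and> branchy inc S' \<and> excess (VS inc S') S' = k)"
proof (induction n rule: less_induct)
  case (less n)
  show ?case
  proof (intro allI impI)
    fix S assume n: "card (E - S) = n" and S: "S \<subseteq> E" and li: "LI inc S" and bs: "branchy inc S"
      and lo: "excess (VS inc S) S \<le> k" and hi: "k \<le> excess V E"
    show "\<exists>S'. S \<subseteq> S' \<and> S' \<subseteq> E \<and> LI inc S' \<and> branchy inc S' \<and> excess (VS inc S') S' = k"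
    proof (cases "excess (VS inc S) S = k")
      case True then show ?thesis using S li bs by blast
    next
      case False
      have ne: "S \<noteq> E"
      proof
        assume "S = E"
        then have "excess (VS inc S) S = excess V E" using VE by simp
        then show False using False lo hi by simp
      qed
      obtain S' where S': "S \<subset> S'" "S' \<subseteq> E" "LI inc S'" "branchy inc S'"
          "excess (VS inc S') S' \<le> excess (VS inc S) S + 1"
        using upstep[OF S li bs ne] by blast
      have fin: "finite (E - S)" using okE by (simp add: ok_def)
      have "E - S' \<subset> E - S" using S'(1) S'(2) by blast
      then have lt: "card (E - S') < n" using psubset_card_mono[OF fin] n by blast
      have lo': "excess (VS inc S') S' \<le> k" using S'(5) lo False by simp
      obtain S'' where S'': "S' \<subseteq> S''" "S'' \<subseteq> E" "LI inc S''" "branchy inc S''" "excess (VS inc S'') S'' = k"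
        using less[rule_format, OF lt refl S'(2) S'(3) S'(4) lo' hi] by blast
      have "S \<subseteq> S''" using S'(1) S''(1) by blast
      then show ?thesis using S''(2-5) by blast
    qed
  qed
qed

lemma final:
  assumes S: "S \<subseteq> E" "LI inc S" "branchy inc S" and lo: "excess (VS inc S) S \<le> k"
    and hi: "k \<le> excess V E" and ab: "a \<in> S" "b \<in> S"
  shows "\<exists>VF EF. subgraph VF EF V E inc \<and> a \<in> EF \<and> b \<in> EF \<and> cacti VF EF inc \<and> excess VF EF = k"
proof -
  obtain S' where S': "S \<subseteq> S'" "S' \<subseteq> E" "LI inc S'" "branchy inc S'" "excess (VS inc S') S' = k"
    using ivt[rule_format, OF refl S lo hi] by blast
  have sg: "subgraph (VS inc S') S' V E inc"
    unfolding subgraph_def using VS_sub[OF S'(2)] S'(2) by (auto simp: VS_def)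
  have c: "cacti (VS inc S') S' inc" by (rule cacti_crit[OF gr S'(2-4)])
  show ?thesis using sg c S' ab by blast
qed

lemma base_same:
  assumes sc: "same_component V E inc a b" and aE: "a \<in> E" and bE: "b \<in> E"
  shows "\<exists>M. M \<subseteq> E \<and> LI inc M \<and> branchy inc M \<and> excess (VS inc M) M \<le> 1 \<and> a \<in> M \<and> b \<in> M"
proof -
  let ?R = "adj E inc"
  obtain u w where uw: "u \<in> inc a" "w \<in> inc b" "?R\<^sup>*\<^sup>* w u" using same_comp_reach[OF sc aE bE] by blast
  then obtain n where "(?R ^^ n) w u" by (meson rtranclp_power)
  then have ex: "\<exists>n. \<exists>x\<in>inc a. \<exists>y\<in>inc b. (?R ^^ n) y x" using uw by blast
  define n0 where "n0 = (LEAST n. \<exists>x\<in>inc a. \<exists>y\<in>inc b. (?R ^^ n) y x)"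
  have "\<exists>x\<in>inc a. \<exists>y\<in>inc b. (?R ^^ n0) y x" unfolding n0_def using LeastI_ex[OF ex] .
  then obtain x where x: "x \<in> inc a" "\<exists>y\<in>inc b. (?R ^^ n0) y x" by blast
  have far: "\<forall>z\<in>VS inc {a}. \<forall>m<n0. \<not> (\<exists>y\<in>inc b. (?R ^^ m) y z)"
  proof (intro ballI allI impI)
    fix z m assume z: "z \<in> VS inc {a}" and m: "m < n0"
    have "\<not> (\<exists>x\<in>inc a. \<exists>y\<in>inc b. (?R ^^ m) y x)" using not_less_Least[OF m[unfolded n0_def]] .
    moreover have "z \<in> inc a" using z by (simp add: VS_def)
    ultimately show "\<not> (\<exists>y\<in>inc b. (?R ^^ m) y z)" by blast
  qed
  have a1: "{a} \<subseteq> E" using aE by blast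
  have o1: "ok inc {a}" by (rule okS[OF a1])
  have xa: "x \<in> VS inc {a}" using x(1) by (simp add: VS_def)
  obtain S0 where S0: "{a} \<subseteq> S0" "S0 \<subseteq> E" "b \<in> S0" "conn inc S0" "Phi inc S0 \<le> 1"
    using path_phase[OF bE, rule_format, OF a1 conn_single xa x(2) far[rule_format] phi_single[OF o1 x(1)]]
    by blast
  have ne: "S0 \<noteq> {}" using S0(3) by blast
  obtain N where N: "S0 \<subseteq> N" "N \<subseteq> E" "conn inc N" "LI inc N" "branchy inc N" "excess (VS inc N) N \<le> 1"
    using finish[OF S0(2) ne S0(4) S0(5)] by blast
  show ?thesis using N S0(1) S0(3) by (intro exI[of _ N]) blast
qed

lemma base_single:
  assumes aE: "a \<in> E"
  shows "\<exists>N. a \<in> N \<and> N \<subseteq> E \<and> conn inc N \<and> LI inc N \<and> branchy inc N \<and> excess (VS inc N) N \<le> 1"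
proof -
  have a1: "{a} \<subseteq> E" using aE by blast
  have o1: "ok inc {a}" by (rule okS[OF a1])
  obtain N where N: "{a} \<subseteq> N" "N \<subseteq> E" "conn inc N" "LI inc N" "branchy inc N" "excess (VS inc N) N \<le> 1"
    using finish[OF a1 _ conn_single phi_single'[OF o1]] by blast
  then show ?thesis by blast
qed

lemma base_diff:
  assumes sc: "\<not> same_component V E inc a b" and aE: "a \<in> E" and bE: "b \<in> E"
  shows "\<exists>M. M \<subseteq> E \<and> LI inc M \<and> branchy inc M \<and> excess (VS inc M) M \<le> 2 \<and> a \<in> M \<and> b \<in> M"
proof -
  obtain A where A: "a \<in> A" "A \<subseteq> E" "conn inc A" "LI inc A" "branchy inc A" "excess (VS inc A) A \<le> 1"
    using base_single[OF aE] by blast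
  obtain B where B: "b \<in> B" "B \<subseteq> E" "conn inc B" "LI inc B" "branchy inc B" "excess (VS inc B) B \<le> 1"
    using base_single[OF bE] by blast
  obtain u where u: "u \<in> inc a" using ok_inc_ne[OF okE aE] by blast
  obtain w where w: "w \<in> inc b" using ok_inc_ne[OF okE bE] by blast
  have d: "VS inc A \<inter> VS inc B = {}"
  proof (rule ccontr)
    assume "VS inc A \<inter> VS inc B \<noteq> {}"
    then obtain z where z: "z \<in> VS inc A" "z \<in> VS inc B" by blast
    have uA: "u \<in> VS inc A" using u A(1) by (auto simp: VS_iff)
    have wB: "w \<in> VS inc B" using w B(1) by (auto simp: VS_iff)
    have "(adj A inc)\<^sup>*\<^sup>* u z" using A(3) z(1) uA unfolding conn_def by blast
    then have 1: "(adj E inc)\<^sup>*\<^sup>* u z" by (rule rt_adj_mono[OF A(2)])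
    have "(adj B inc)\<^sup>*\<^sup>* z w" using B(3) z(2) wB unfolding conn_def by blast
    then have 2: "(adj E inc)\<^sup>*\<^sup>* z w" by (rule rt_adj_mono[OF B(2)])
    have "(adj E inc)\<^sup>*\<^sup>* u w" using 1 2 by (rule rtranclp_trans)
    then have "same_component V E inc a b" by (rule reach_same[OF u w _ aE bE])
    then show False using sc by blast
  qed
  have U: "LI inc (A \<union> B) \<and> branchy inc (A \<union> B) \<and>
         excess (VS inc (A \<union> B)) (A \<union> B) = excess (VS inc A) A + excess (VS inc B) B"
    by (rule union_good[OF A(2) B(2) d A(4) B(4) A(5) B(5)])
  have "A \<union> B \<subseteq> E" using A(2) B(2) by blast
  then show ?thesis using U A(1,6) B(1,6) by (intro exI[of _ "A \<union> B"]) auto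
qed

end

theorem mainTheorem5:
  fixes V :: "'v set" and E :: "'e set" and inc :: "'e \<Rightarrow> 'v set" and a b :: 'e
  assumes "cacti V E inc" and "a \<in> E" and "b \<in> E"
  shows "(same_component V E inc a b \<longrightarrow>
            (\<forall>k::int. 1 \<le> k \<and> k \<le> excess V E \<longrightarrow>
               (\<exists>VF EF. subgraph VF EF V E inc \<and> a \<in> EF \<and> b \<in> EF \<and>
                        cacti VF EF inc \<and> excess VF EF = k)))
       \<and> (\<not> same_component V E inc a b \<longrightarrow>
            (\<forall>k::int. 2 \<le> k \<and> k \<le> excess V E \<longrightarrow>
               (\<exists>VF EF. subgraph VF EF V E inc \<and> a \<in> EF \<and> b \<in> EF \<and>
                        cacti VF EF inc \<and> excess VF EF = k)))"
proof -
  interpret CG V E inc by (rule CG.intro[OF assms(1)])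
  show ?thesis
  proof (intro conjI impI allI)
    fix k :: int
    assume sc: "same_component V E inc a b" and k: "1 \<le> k \<and> k \<le> excess V E"
    obtain M where M: "M \<subseteq> E" "LI inc M" "branchy inc M" "excess (VS inc M) M \<le> 1" "a \<in> M" "b \<in> M"
      using base_same[OF sc assms(2,3)] by blast
    have lo: "excess (VS inc M) M \<le> k" using M(4) k by simp
    show "\<exists>VF EF. subgraph VF EF V E inc \<and> a \<in> EF \<and> b \<in> EF \<and> cacti VF EF inc \<and> excess VF EF = k"
      using final[OF M(1-3) lo _ M(5,6)] k by blast
  next
    fix k :: int
    assume sc: "\<not> same_component V E inc a b" and k: "2 \<le> k \<and> k \<le> excess V E"
    obtain M where M: "M \<subseteq> E" "LI inc M" "branchy inc M" "excess (VS inc M) M \<le> 2" "a \<in> M" "b \<in> M"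
      using base_diff[OF sc assms(2,3)] by blast
    have lo: "excess (VS inc M) M \<le> k" using M(4) k by simp
    show "\<exists>VF EF. subgraph VF EF V E inc \<and> a \<in> EF \<and> b \<in> EF \<and> cacti VF EF inc \<and> excess VF EF = k"
      using final[OF M(1-3) lo _ M(5,6)] k by blast
  qed
qed


end
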